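(* Let $\beta\ge0$, $0<a\le1+\beta$, and $x$ real with $0\le x\le\frac{1+\beta}{a}x<1$. For integers $j,k\ge0$ define $$\alpha_{j,k}=\frac{(1-j)_k}{k!}B^{(j)}_k(0)\,(1+\beta)^{-k},\qquad \gamma_{j,k}=(-1)^k\frac{(j+1)_k}{k!}B^{(-j)}_k(0)\,a^{-k}.$$ Then for every positive integer $n$ and every $t>0$, $$\left|{}_2F_1\!\left(\begin{matrix}1,t(1+\beta)\\ at+1\end{matrix};x\right)-\sum_{i=0}^{n-1}\sum_{j=0}^{i}\sum_{k=0}^\infty\frac{\gamma_{k,j}\alpha_{k,i-j}}{t^i}\left(\frac{1+\beta}{a}x\right)^k\right|\le\frac{(2n)!}{2}\frac{(1+\beta)x\,(a+(1+\beta)x)}{a^{n+2}\left(1-\frac{(1+\beta)x}{a}\right)^{2n+1}}\frac1{t^n},$$ and consequently, as $t\to\infty$, one has the asymptotic series $${}_2F_1\!\left(\begin{matrix}1,t(1+\beta)\\ at+1\end{matrix};x\right)\sim\sum_{i=0}^\infty t^{-i}\left(\sum_{j=0}^{i}\sum_{k=0}^\infty\gamma_{k,j}\alpha_{k,i-j}\left(\frac{1+\beta}{a}x\right)^k\right).$$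
   Context: $(q)_0=1$, $(q)_n=q(q+1)\cdots(q+n-1)$. ${}_2F_1\!\left(\begin{matrix}a_1,a_2\\ d\end{matrix};x\right)=\sum_{n\ge0}\frac{(a_1)_n(a_2)_n}{(d)_n}\frac{x^n}{n!}$. The generalized Bernoulli numbers $B^{(j)}_k(0)$ (for integer $j$, possibly negative) are defined by $\left(\frac{s}{e^s-1}\right)^j=\sum_{k=0}^\infty\frac{s^k}{k!}B^{(j)}_k(0)$ for $|s|<2\pi$. (With these definitions, $\frac{((1+\beta)t)_j}{((1+\beta)t)^j}=\sum_k\alpha_{j,k}t^{-k}$ and, for $at>j$, $\frac{(at)^j}{(at+1)_j}=\sum_k\gamma_{j,k}t^{-k}$.) *)

theory Defs
  imports Complex_Main "HOL-Library.Landau_Symbols"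
begin

definition hyp2f1 :: "real \<Rightarrow> real \<Rightarrow> real \<Rightarrow> real \<Rightarrow> real" where
  "hyp2f1 a1 a2 d x =
     (\<Sum>n. pochhammer a1 n * pochhammer a2 n / pochhammer d n * x ^ n / fact n)"

text \<open>Generalized Bernoulli numbers B^(j)_k(0), j an integer (possibly negative):
  the coefficients of the expansion (s/(e^s-1))^j = sum_k s^k/k! B^(j)_k(0), |s| < 2 pi.
  (The point s = 0 is excluded, where the left side is a removable singularity.)\<close>
definition gen_bernoulli :: "int \<Rightarrow> nat \<Rightarrow> real" where
  "gen_bernoulli j k =
     (THE c. \<forall>s::real. s \<noteq> 0 \<and> \<bar>s\<bar> < 2 * pi \<longrightarrow>
        (\<lambda>m. s ^ m / fact m * c m) sums ((s / (exp s - 1)) powi j)) k"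

definition alpha_coef :: "real \<Rightarrow> nat \<Rightarrow> nat \<Rightarrow> real" where
  "alpha_coef \<beta> j k =
     pochhammer (1 - real j) k / fact k * gen_bernoulli (int j) k * (1 + \<beta>) powi (- int k)"

definition gamma_coef :: "real \<Rightarrow> nat \<Rightarrow> nat \<Rightarrow> real" where
  "gamma_coef a j k =
     (-1) ^ k * pochhammer (real j + 1) k / fact k * gen_bernoulli (- int j) k * a powi (- int k)"

definition expansion_coef :: "real \<Rightarrow> real \<Rightarrow> real \<Rightarrow> nat \<Rightarrow> real" where
  "expansion_coef \<beta> a x i =
     (\<Sum>j\<le>i. \<Sum>k. gamma_coef a k j * alpha_coef \<beta> k (i - j) * ((1 + \<beta>) / a * x) ^ k)"

end

theory Submission
  imports Defs "HOL-Complex_Analysis.Complex_Analysis"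
begin

definition EF :: "complex fps" where "EF = fps_shift 1 (fps_exp 1)"

lemma EF_radius [simp]: "fps_conv_radius EF = \<infinity>"
  by (simp add: EF_def)

lemma EF_nth0 [simp]: "EF $ 0 = 1"
  by (simp add: EF_def)

lemma EF_times_X: "EF * fps_X = fps_exp 1 - 1"
proof (rule fps_ext)
  fix n show "(EF * fps_X) $ n = (fps_exp 1 - 1) $ n"
    by (cases n) (simp_all add: EF_def)
qed

lemma EF_eval: assumes "z \<noteq> 0" shows "eval_fps EF z = (exp z - 1) / z"
proof -
  have "eval_fps (EF * fps_X) z = eval_fps EF z * z"
    by (subst eval_fps_mult) auto
  also have "eval_fps (EF * fps_X) z = exp z - 1"
    unfolding EF_times_X by (subst eval_fps_diff) auto
  finally show ?thesis using assms by (simp add: field_simps)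
qed

lemma EF_eval_nz: assumes "norm z < 2 * pi" shows "eval_fps EF z \<noteq> 0"
proof (cases "z = 0")
  case True thus ?thesis by (simp add: eval_fps_at_0)
next
  case False
  have "exp z \<noteq> 1"
  proof
    assume "exp z = 1"
    then obtain n :: int where re: "Re z = 0" and im: "Im z = of_int (2 * n) * pi"
      by (auto simp: exp_eq_1)
    have "\<bar>Im z\<bar> < 2 * pi" using assms abs_Im_le_cmod[of z] by linarith
    hence "\<bar>of_int n\<bar> < (1::real)" using im pi_gt_zero
      by (auto simp: abs_mult)
    hence "n = 0" by linarith
    hence "z = 0" using re im by (simp add: complex_eq_iff)
    thus False using False by simp
  qed
  thus ?thesis using False by (simp add: EF_eval)
qed

definition CF :: "int \<Rightarrow> complex fps" where
  "CF j = (if j \<ge> 0 then inverse EF ^ nat j else EF ^ nat (- j))"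

definition cfun :: "int \<Rightarrow> complex \<Rightarrow> complex" where
  "cfun j z = (if j \<ge> 0 then inverse (eval_fps EF z) ^ nat j else eval_fps EF z ^ nat (- j))"

lemma cfun_expansion: "cfun j has_fps_expansion CF j"
proof -
  have E: "eval_fps EF has_fps_expansion EF"
    by (rule eval_fps_has_fps_expansion) simp
  show ?thesis
    unfolding cfun_def[abs_def] CF_def
    by (cases "j \<ge> 0") (auto intro!: fps_expansion_intros E)
qed

lemma cfun_holo: "cfun j holomorphic_on eball 0 (ereal (2 * pi))"
proof -
  have "eval_fps EF holomorphic_on eball 0 (ereal (2 * pi))"
    by (rule holomorphic_on_eval_fps) simp
  moreover have "\<forall>z \<in> eball 0 (ereal (2*pi)). eval_fps EF z \<noteq> 0"
    using EF_eval_nz by auto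
  ultimately show ?thesis
    unfolding cfun_def[abs_def]
    by (cases "j \<ge> 0") (auto intro!: holomorphic_intros)
qed

lemma cfun_real:
  fixes s :: real assumes "s \<noteq> 0"
  shows "cfun j (of_real s) = of_real ((s / (exp s - 1)) powi j)"
proof -
  have "eval_fps EF (of_real s) = of_real ((exp s - 1) / s)"
    using assms by (simp add: EF_eval exp_of_real)
  thus ?thesis
    by (simp add: cfun_def power_int_def)
qed

lemma real_sums:
  fixes s :: real assumes "s \<noteq> 0" "\<bar>s\<bar> < 2 * pi"
  shows "(\<lambda>m. s ^ m / fact m * (fact m * Re (CF j $ m))) sums ((s / (exp s - 1)) powi j)"
proof -
  have "(\<lambda>m. CF j $ m * (of_real s) ^ m) sums cfun j (of_real s)"
    by (rule has_fps_expansion_imp_sums_complex[OF cfun_expansion cfun_holo]) (use assms in auto)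
  hence "(\<lambda>m. Re (CF j $ m * (of_real s) ^ m)) sums Re (cfun j (of_real s))"
    by (simp add: sums_complex_iff)
  moreover have "\<And>m. Re (CF j $ m * (of_real s) ^ m) = s ^ m / fact m * (fact m * Re (CF j $ m))"
    by (simp flip: of_real_power)
  moreover have "Re (cfun j (of_real s)) = (s / (exp s - 1)) powi j"
    by (simp only: cfun_real[OF assms(1)] Re_complex_of_real)
  ultimately show ?thesis by (simp add: mult.commute)
qed

lemma powser_unique_zero:
  fixes e :: "nat \<Rightarrow> real"
  assumes R: "R > 0" and h: "\<And>s. s \<noteq> 0 \<Longrightarrow> \<bar>s\<bar> < R \<Longrightarrow> (\<lambda>m. e m * s ^ m) sums 0"
  shows "e m = 0"
proof (rule ccontr)
  assume "e m \<noteq> 0"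
  define m0 where "m0 = (LEAST k. e k \<noteq> 0)"
  have em0: "e m0 \<noteq> 0" unfolding m0_def by (rule LeastI) fact
  have below: "e k = 0" if "k < m0" for k
    using not_less_Least[of k "\<lambda>k. e k \<noteq> 0"] that unfolding m0_def by auto
  define P where "P s = (\<Sum>k. e (k + m0) * s ^ k)" for s
  have sh: "(\<lambda>k. e (k + m0) * s ^ k) sums 0" if "s \<noteq> 0" "\<bar>s\<bar> < R" for s
  proof -
    have "(\<lambda>i. e i * s ^ i) sums (0 + (\<Sum>i<m0. e i * s ^ i))"
      using h[OF that] below by simp
    hence "(\<lambda>k. e (k + m0) * s ^ (k + m0)) sums 0"
      using sums_iff_shift[of "\<lambda>i. e i * s ^ i" m0 0] by simp
    hence "(\<lambda>k. (e (k + m0) * s ^ k) * s ^ m0) sums 0"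
      by (simp add: power_add mult_ac)
    hence "(\<lambda>k. (e (k + m0) * s ^ k) * s ^ m0 / s ^ m0) sums (0 / s ^ m0)"
      by (rule sums_divide)
    thus ?thesis using that by simp
  qed
  have summ: "summable (\<lambda>k. e (k + m0) * (R/2) ^ k)"
    using sh[of "R/2"] R by (auto simp: sums_iff)
  have "isCont P 0" unfolding P_def
    by (rule isCont_powser[OF summ]) (use R in simp)
  hence lim1: "(P \<longlongrightarrow> P 0) (at 0)" by (simp add: isCont_def)
  have ev: "eventually (\<lambda>s. P s = 0) (at (0::real))"
  proof -
    have "eventually (\<lambda>s. s \<in> ball 0 R - {0}) (at (0::real))"
      by (rule eventually_at_in_open) (use R in auto)
    thus ?thesis
      by eventually_elim (use sh in \<open>auto simp: P_def sums_iff dist_norm\<close>)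
  qed
  have lim2: "(P \<longlongrightarrow> 0) (at 0)"
    by (rule tendsto_eventually) (rule ev)
  have "P 0 = 0" using tendsto_unique[OF _ lim1 lim2] by simp
  moreover have "P 0 = e m0" unfolding P_def using powser_zero[of "\<lambda>k. e (k + m0)"] by simp
  ultimately show False using em0 by simp
qed

lemma gen_bernoulli_eq: "gen_bernoulli j k = fact k * Re (CF j $ k)"
proof -
  let ?P = "\<lambda>c. \<forall>s::real. s \<noteq> 0 \<and> \<bar>s\<bar> < 2 * pi \<longrightarrow>
        (\<lambda>m. s ^ m / fact m * c m) sums ((s / (exp s - 1)) powi j)"
  have "(THE c. ?P c) = (\<lambda>m. fact m * Re (CF j $ m))"
  proof (rule the_equality)
    show "?P (\<lambda>m. fact m * Re (CF j $ m))" using real_sums by blast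
  next
    fix c assume Pc: "?P c"
    show "c = (\<lambda>m. fact m * Re (CF j $ m))"
    proof
      fix m
      define e where "e m = (c m - fact m * Re (CF j $ m)) / fact m" for m
      have "(\<lambda>m. e m * s ^ m) sums 0" if "s \<noteq> 0" "\<bar>s\<bar> < 2 * pi" for s
      proof -
        have "(\<lambda>m. s ^ m / fact m * c m - s ^ m / fact m * (fact m * Re (CF j $ m))) sums
              ((s / (exp s - 1)) powi j - (s / (exp s - 1)) powi j)"
          using Pc that real_sums[OF that] by (intro sums_diff) auto
        thus ?thesis by (simp add: e_def field_simps)
      qed
      hence "e m = 0" by (intro powser_unique_zero[of "2*pi"]) auto
      thus "c m = fact m * Re (CF j $ m)" by (simp add: e_def)
    qed
  qed
  thus ?thesis unfolding gen_bernoulli_def by simp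
qed

lemma EF_nth: "fps_nth EF n = 1 / fact (Suc n)"
  by (simp add: EF_def fps_exp_def)

lemma aux1: fixes F x :: real assumes "F > 0" "x \<ge> 0"
  shows "(1 + x) / ((2 + x) * F) = 1 / F - 1 / ((2 + x) * F)"
proof -
  have nz: "2 + x \<noteq> 0" using assms by simp
  have "(1 + x) / ((2 + x) * F) = ((2 + x) - 1) / ((2 + x) * F)" by simp
  also have "\<dots> = (2 + x) / ((2 + x) * F) - 1 / ((2 + x) * F)" by (rule diff_divide_distrib)
  also have "(2 + x) / ((2 + x) * F) = 1 / F" using nz by simp
  finally show ?thesis .
qed

lemma EF_deriv: "fps_X * fps_deriv EF = 1 + fps_X * EF - EF"
proof (rule fps_ext)
  fix n
  show "fps_nth (fps_X * fps_deriv EF) n = fps_nth (1 + fps_X * EF - EF) n"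
  proof (cases n)
    case 0 thus ?thesis by simp
  next
    case (Suc m)
    have "fps_nth (fps_X * fps_deriv EF) n = of_nat (Suc m) / fact (Suc (Suc m))"
      using Suc by (simp add: EF_nth)
    moreover have "fps_nth (1 + fps_X * EF - EF) n = 1 / fact (Suc m) - 1 / fact (Suc (Suc m))"
      using Suc by (simp add: EF_nth)
    moreover have "(of_nat (Suc m) :: complex) / fact (Suc (Suc m)) = 1 / fact (Suc m) - 1 / fact (Suc (Suc m))"
    proof -
      have "(of_nat (Suc m) :: real) / fact (Suc (Suc m)) = 1 / fact (Suc m) - 1 / fact (Suc (Suc m))"
        using aux1[of "fact (Suc m)" "real m"] by (simp add: fact_Suc[of "Suc m"] del: fact_Suc)
      hence "of_real ((of_nat (Suc m) :: real) / fact (Suc (Suc m))) = (of_real (1 / fact (Suc m) - 1 / fact (Suc (Suc m))) :: complex)"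
        by simp
      thus ?thesis by simp
    qed
    ultimately show ?thesis by simp
  qed
qed

lemma ring_aux: fixes c X E P :: "'a::comm_ring_1"
  shows "c * (1 + X * E - E) * P = (- c) * (E * P) - (- c) * X * (E * P) - (- c) * P"
  by (simp add: algebra_simps)

lemma CF_ode:
  "fps_X * fps_deriv (CF k) = fps_const (of_int k) * CF k - fps_const (of_int k) * fps_X * CF k
      - fps_const (of_int k) * CF (k + 1)"
proof (cases "k \<ge> 0")
  case True
  define H where "H = inverse EF"
  have HE: "EF * H = 1" unfolding H_def by (rule inverse_mult_eq_1') simp
  obtain n where k: "k = int n" using True nonneg_eq_int by blast
  have CFk: "CF k = H ^ n" "CF (k + 1) = H ^ Suc n" using k by (simp_all add: CF_def H_def nat_add_distrib)
  have dH: "fps_deriv H = - fps_deriv EF * H ^ 2" unfolding H_def by (rule fps_inverse_deriv) simp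
  show ?thesis
  proof (cases n)
    case 0 thus ?thesis using k by (simp add: CF_def)
  next
    case (Suc m)
    have "fps_X * fps_deriv (CF k) = fps_X * (fps_const (of_nat n) * fps_deriv H * H ^ m)"
      using Suc CFk by (simp only: fps_deriv_power diff_Suc_1)
    also have "\<dots> = - (fps_const (of_nat n) * (fps_X * fps_deriv EF) * H ^ Suc (Suc m))"
      by (simp add: dH algebra_simps power2_eq_square)
    also have "\<dots> = - (fps_const (of_nat n) * (1 + fps_X * EF - EF) * H ^ Suc (Suc m))"
      by (simp add: EF_deriv)
    also have "\<dots> = fps_const (of_nat n) * (EF * H) * H ^ Suc m - fps_const (of_nat n) * fps_X * (EF * H) * H ^ Suc m
      - fps_const (of_nat n) * H ^ Suc (Suc m)"
      by (simp add: algebra_simps)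
    also have "\<dots> = fps_const (of_int k) * CF k - fps_const (of_int k) * fps_X * CF k
      - fps_const (of_int k) * CF (k + 1)"
      using Suc CFk k HE by simp
    finally show ?thesis .
  qed
next
  case False
  obtain n where k: "k = - int (Suc n)" using False
  proof -
    have "k = - int (Suc (nat (- k) - 1))" using False by linarith
    thus ?thesis using that by blast
  qed
  have CFk1: "CF k = EF ^ Suc n"
  proof -
    have "CF k = EF ^ nat (- k)" using k by (simp add: CF_def)
    moreover have "nat (- k) = Suc n" using k by simp
    ultimately show ?thesis by simp
  qed
  have CFk2: "CF (k + 1) = EF ^ n"
  proof (cases n)
    case 0 thus ?thesis using k by (simp add: CF_def)
  next
    case (Suc m)
    have "CF (k + 1) = EF ^ nat (- (k + 1))" using k Suc by (simp add: CF_def)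
    moreover have "nat (- (k + 1)) = n" using k by simp
    ultimately show ?thesis by simp
  qed
  note CFk = CFk1 CFk2
  let ?c = "fps_const (of_nat (Suc n) :: complex)"
  have hc: "fps_const (of_int k :: complex) = - ?c" using k by simp
  have "fps_X * fps_deriv (CF k) = fps_X * (?c * fps_deriv EF * EF ^ n)"
    using CFk by (simp only: fps_deriv_power diff_Suc_1)
  also have "\<dots> = ?c * (fps_X * fps_deriv EF) * EF ^ n"
    by (simp only: mult_ac)
  also have "\<dots> = ?c * (1 + fps_X * EF - EF) * EF ^ n"
    by (simp only: EF_deriv)
  also have "\<dots> = (- ?c) * (EF * EF ^ n) - (- ?c) * fps_X * (EF * EF ^ n) - (- ?c) * EF ^ n"
    by (rule ring_aux)
  also have "\<dots> = fps_const (of_int k) * CF k - fps_const (of_int k) * fps_X * CF k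
      - fps_const (of_int k) * CF (k + 1)"
    by (simp only: CFk hc power_Suc)
  finally show ?thesis .
qed

definition rc :: "int \<Rightarrow> nat \<Rightarrow> real" where "rc j n = Re (fps_nth (CF j) n)"

lemma rc_0 [simp]: "rc j 0 = 1"
  by (simp add: rc_def CF_def fps_nth_power_0)

lemma rc_zero_index: "rc 0 n = (if n = 0 then 1 else 0)"
  by (simp add: rc_def CF_def)

lemma rc_rec:
  assumes "n \<ge> 1"
  shows "real n * rc k n = real_of_int k * rc k n - real_of_int k * rc k (n - 1) - real_of_int k * rc (k + 1) n"
proof -
  have "fps_nth (fps_X * fps_deriv (CF k)) n = fps_nth (fps_const (of_int k) * CF k - fps_const (of_int k) * fps_X * CF k
      - fps_const (of_int k) * CF (k + 1)) n"
    by (simp only: CF_ode)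
  hence "of_nat n * fps_nth (CF k) n = of_int k * fps_nth (CF k) n - of_int k * fps_nth (CF k) (n - 1)
      - of_int k * fps_nth (CF (k + 1)) n"
    using assms by (cases n) (simp_all add: mult.assoc)
  hence "Re (of_nat n * fps_nth (CF k) n) = Re (of_int k * fps_nth (CF k) n - of_int k * fps_nth (CF k) (n - 1)
      - of_int k * fps_nth (CF (k + 1)) n)" by simp
  thus ?thesis by (simp add: rc_def)
qed

lemma gen_bernoulli_rc: "gen_bernoulli j n = fact n * rc j n"
  by (simp add: gen_bernoulli_eq rc_def)

definition aseq :: "nat \<Rightarrow> nat \<Rightarrow> real" where
  "aseq k n = pochhammer (1 - real k) n * rc (int k) n"

definition gseq :: "nat \<Rightarrow> nat \<Rightarrow> real" where
  "gseq k n = (-1) ^ n * pochhammer (real k + 1) n * rc (- int k) n"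

lemma aseq_0 [simp]: "aseq k 0 = 1" by (simp add: aseq_def)
lemma gseq_0 [simp]: "gseq k 0 = 1" by (simp add: gseq_def)

lemma aseq_rec:
  assumes "n \<ge> 1"
  shows "aseq (Suc k) n = aseq k n + real k * aseq k (n - 1)"
proof (cases "k = 0")
  case True
  obtain m where n: "n = Suc m" using assms by (cases n) auto
  show ?thesis using True n by (simp add: aseq_def rc_zero_index pochhammer_rec)
next
  case False
  obtain m where n: "n = Suc m" using assms by (cases n) auto
  have R: "real n * rc k n = real k * rc k n - real k * rc k m - real k * rc (int k + 1) n"
    using rc_rec[OF assms, of "int k"] n by simp
  have ik: "int (Suc k) = int k + 1" by simp
  have kr: "real k * rc (int k + 1) n = (real k - real n) * rc k n - real k * rc k m"
    using R by (simp add: algebra_simps)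
  have p1: "pochhammer (1 - real (Suc k)) n = - real k * pochhammer (1 - real k) m"
    using n by (simp add: pochhammer_rec)
  have p2: "pochhammer (1 - real k) n = pochhammer (1 - real k) m * (1 - real k + real m)"
    using n by (simp add: pochhammer_Suc)
  have "aseq (Suc k) n = - pochhammer (1 - real k) m * (real k * rc (int k + 1) n)"
    unfolding aseq_def p1 ik by simp
  also have "\<dots> = - pochhammer (1 - real k) m * ((real k - real n) * rc k n - real k * rc k m)"
    by (simp only: kr)
  also have "\<dots> = aseq k n + real k * aseq k (n - 1)"
    unfolding aseq_def p2 using n by (simp add: algebra_simps)
  finally show ?thesis .
qed

lemma gseq_rec:
  assumes "n \<ge> 1"
  shows "gseq k n = gseq (Suc k) n + real (Suc k) * gseq (Suc k) (n - 1)"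
proof -
  obtain m where n: "n = Suc m" using assms by (cases n) auto
  have R: "real n * rc (- int (Suc k)) n = - real (Suc k) * rc (- int (Suc k)) n
     + real (Suc k) * rc (- int (Suc k)) m + real (Suc k) * rc (- int k) n"
  proof -
    have e1: "- int (Suc k) + 1 = - int k" by simp
    have e2: "real_of_int (- int (Suc k)) = - real (Suc k)" by simp
    show ?thesis using rc_rec[OF assms, of "- int (Suc k)"] n unfolding e1 e2 by (simp only: diff_Suc_1; simp)
  qed
  have kr: "real (Suc k) * rc (- int k) n = (real n + real k + 1) * rc (- int (Suc k)) n
      - real (Suc k) * rc (- int (Suc k)) m"
    using R by (simp add: algebra_simps)
  have p1: "pochhammer (real k + 1) n = (real k + 1) * pochhammer (real k + 2) m"
    using n by (simp add: pochhammer_rec add.commute add.left_commute)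
  have p2: "pochhammer (real k + 2) n = pochhammer (real k + 2) m * (real k + 2 + real m)"
    using n by (simp add: pochhammer_Suc)
  have "gseq k n = (-1) ^ n * pochhammer (real k + 2) m * (real (Suc k) * rc (- int k) n)"
    unfolding gseq_def p1 by simp
  also have "\<dots> = (-1) ^ n * pochhammer (real k + 2) m * ((real n + real k + 1) * rc (- int (Suc k)) n
      - real (Suc k) * rc (- int (Suc k)) m)"
    by (simp only: kr)
  also have "\<dots> = gseq (Suc k) n + real (Suc k) * gseq (Suc k) (n - 1)"
  proof -
    have e: "real (Suc k) + 1 = real k + 2" by simp
    have g1: "gseq (Suc k) n = (-1) ^ n * (pochhammer (real k + 2) m * (real k + 2 + real m)) * rc (- int (Suc k)) n"
      unfolding gseq_def e p2 by (rule refl)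
    have g2: "gseq (Suc k) (n - 1) = (-1) ^ m * pochhammer (real k + 2) m * rc (- int (Suc k)) m"
      unfolding gseq_def e using n by simp
    have sg: "(-1::real) ^ n = - ((-1) ^ m)" using n by simp
    have rn: "real n = real m + 1" using n by simp
    show ?thesis unfolding g1 g2 sg rn by (simp add: algebra_simps)
  qed
  finally show ?thesis .
qed

lemma powi_neg_nat: "(x::real) powi (- int n) = 1 / x ^ n"
  by (simp add: power_int_minus divide_inverse)

lemma alpha_coef_eq: "alpha_coef \<beta> k n = aseq k n / (1 + \<beta>) ^ n"
proof -
  have "(fact n :: real) \<noteq> 0" by simp
  thus ?thesis by (simp add: alpha_coef_def aseq_def gen_bernoulli_rc powi_neg_nat)
qed

lemma gamma_coef_eq: "gamma_coef a k n = gseq k n / a ^ n"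
proof -
  have "(fact n :: real) \<noteq> 0" by simp
  thus ?thesis by (simp add: gamma_coef_def gseq_def gen_bernoulli_rc powi_neg_nat)
qed

definition Afps :: "real \<Rightarrow> nat \<Rightarrow> real fps" where
  "Afps b k = Abs_fps (\<lambda>n. aseq k n / b ^ n)"
definition Gfps :: "real \<Rightarrow> nat \<Rightarrow> real fps" where
  "Gfps a k = Abs_fps (\<lambda>n. gseq k n / a ^ n)"
definition psi :: "real \<Rightarrow> real fps" where
  "psi q = Abs_fps (\<lambda>n. (- q) ^ n)"
definition Phi :: "real \<Rightarrow> real \<Rightarrow> nat \<Rightarrow> real fps" where
  "Phi a b k = Gfps a k * Afps b k"
definition phi :: "real \<Rightarrow> real \<Rightarrow> nat \<Rightarrow> real fps" where
  "phi a b k = (1 + fps_const (real k / b) * fps_X) * psi (real (Suc k) / a)"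

lemma lin_mult_nth:
  fixes c :: real and F :: "real fps"
  shows "fps_nth ((1 + fps_const c * fps_X) * F) n = (if n = 0 then fps_nth F 0 else fps_nth F n + c * fps_nth F (n - 1))"
proof -
  have "(1 + fps_const c * fps_X) * F = F + fps_const c * (fps_X * F)"
    by (simp add: distrib_right mult.assoc)
  thus ?thesis by (simp del: fps_mult_left_const_nth add: fps_mult_left_const_nth)
qed

lemma aseq_zero_k: "aseq 0 n = (if n = 0 then 1 else 0)"
  by (simp add: aseq_def rc_zero_index)

lemma gseq_zero_k: "gseq 0 n = (if n = 0 then 1 else 0)"
  by (simp add: gseq_def rc_zero_index)

lemma Afps_0: "Afps b 0 = 1"
  by (rule fps_ext) (simp add: Afps_def aseq_zero_k)

lemma Gfps_0: "Gfps a 0 = 1"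
  by (rule fps_ext) (simp add: Gfps_def gseq_zero_k)

lemma Afps_Suc:
  assumes "b \<noteq> 0"
  shows "Afps b (Suc k) = (1 + fps_const (real k / b) * fps_X) * Afps b k"
proof (rule fps_ext)
  fix n
  show "fps_nth (Afps b (Suc k)) n = fps_nth ((1 + fps_const (real k / b) * fps_X) * Afps b k) n"
  proof (cases n)
    case 0 thus ?thesis by (simp add: Afps_def lin_mult_nth)
  next
    case (Suc m)
    have "aseq (Suc k) n = aseq k n + real k * aseq k m"
      using aseq_rec[of n k] Suc by simp
    thus ?thesis using Suc assms by (simp add: Afps_def lin_mult_nth field_simps)
  qed
qed

lemma Gfps_rec:
  assumes "a \<noteq> 0"
  shows "(1 + fps_const (real (Suc k) / a) * fps_X) * Gfps a (Suc k) = Gfps a k"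
proof (rule fps_ext)
  fix n
  show "fps_nth ((1 + fps_const (real (Suc k) / a) * fps_X) * Gfps a (Suc k)) n = fps_nth (Gfps a k) n"
  proof (cases n)
    case 0 thus ?thesis by (simp add: Gfps_def lin_mult_nth)
  next
    case (Suc m)
    have "gseq k n = gseq (Suc k) n + real (Suc k) * gseq (Suc k) m"
      using gseq_rec[of n k] Suc by simp
    thus ?thesis using Suc assms by (simp add: Gfps_def lin_mult_nth field_simps)
  qed
qed

lemma psi_inv: "psi q * (1 + fps_const q * fps_X) = 1"
proof (rule fps_ext)
  fix n
  show "fps_nth (psi q * (1 + fps_const q * fps_X)) n = fps_nth (1 :: real fps) n"
    unfolding mult.commute[of "psi q"] lin_mult_nth by (cases n) (simp_all add: psi_def)
qed

lemma Gfps_Suc: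
  assumes "a \<noteq> 0"
  shows "Gfps a (Suc k) = psi (real (Suc k) / a) * Gfps a k"
proof -
  have "psi (real (Suc k) / a) * Gfps a k =
        (psi (real (Suc k) / a) * (1 + fps_const (real (Suc k) / a) * fps_X)) * Gfps a (Suc k)"
    by (simp only: Gfps_rec[OF assms] mult.assoc)
  also have "\<dots> = Gfps a (Suc k)" by (simp add: psi_inv)
  finally show ?thesis by simp
qed

lemma Phi_0: "Phi a b 0 = 1" by (simp add: Phi_def Afps_0 Gfps_0)

lemma Phi_Suc:
  assumes "a \<noteq> 0" "b \<noteq> 0"
  shows "Phi a b (Suc k) = phi a b k * Phi a b k"
  by (simp add: Phi_def phi_def Afps_Suc[OF assms(2)] Gfps_Suc[OF assms(1)] mult_ac)

lemma Phi_nth: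
  "fps_nth (Phi a b k) i = (\<Sum>j\<le>i. gseq k j / a ^ j * (aseq k (i - j) / b ^ (i - j)))"
  by (simp add: Phi_def fps_mult_nth Gfps_def Afps_def atLeast0AtMost)

definition conv :: "(nat \<Rightarrow> real) \<Rightarrow> (nat \<Rightarrow> real) \<Rightarrow> nat \<Rightarrow> real" where
  "conv M N n = (\<Sum>r\<le>n. M r * N (n - r))"

definition cm :: "real fps \<Rightarrow> (nat \<Rightarrow> real) \<Rightarrow> bool" where
  "cm P M \<longleftrightarrow> (\<forall>i. \<bar>fps_nth P i\<bar> \<le> M i)"

definition good :: "real fps \<Rightarrow> (real \<Rightarrow> real) \<Rightarrow> (nat \<Rightarrow> real) \<Rightarrow> bool" where
  "good P f M \<longleftrightarrow> fps_nth P 0 = 1 \<and> cm P M \<and> (\<forall>u\<ge>0. \<bar>f u\<bar> \<le> 1) \<and>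
     (\<forall>n u. 0 \<le> u \<longrightarrow> \<bar>f u - (\<Sum>i<n. fps_nth P i * u ^ i)\<bar> \<le> M n * u ^ n)"

definition Mk :: "real \<Rightarrow> nat \<Rightarrow> nat \<Rightarrow> real" where
  "Mk K k n = real ((n + k - 1) choose n) * K ^ n"

lemma cm_mult:
  assumes "cm P M" "cm Q N"
  shows "cm (P * Q) (conv M N)"
  unfolding cm_def
proof
  fix i
  have "\<bar>fps_nth (P * Q) i\<bar> = \<bar>\<Sum>r\<le>i. fps_nth P r * fps_nth Q (i - r)\<bar>"
    by (simp add: fps_mult_nth atLeast0AtMost)
  also have "\<dots> \<le> (\<Sum>r\<le>i. \<bar>fps_nth P r * fps_nth Q (i - r)\<bar>)"
    by (rule sum_abs)
  also have "\<dots> \<le> (\<Sum>r\<le>i. M r * N (i - r))"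
  proof (rule sum_mono)
    fix r
    have "\<bar>fps_nth P r\<bar> \<le> M r" "\<bar>fps_nth Q (i - r)\<bar> \<le> N (i - r)"
      using assms by (auto simp: cm_def)
    thus "\<bar>fps_nth P r * fps_nth Q (i - r)\<bar> \<le> M r * N (i - r)"
      by (simp add: abs_mult mult_mono')
  qed
  finally show "\<bar>fps_nth (P * Q) i\<bar> \<le> conv M N i" by (simp add: conv_def)
qed

lemma cm_mono: "cm P M \<Longrightarrow> (\<And>n. M n \<le> M' n) \<Longrightarrow> cm P M'"
  unfolding cm_def by (meson order_trans)

lemma good_mono:
  assumes "good P f M" "\<And>n. M n \<le> M' n"
  shows "good P f M'"
  unfolding good_def
proof (intro conjI allI impI)
  show "fps_nth P 0 = 1" "cm P M'" using assms cm_mono unfolding good_def by blast+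
  show "\<bar>f u\<bar> \<le> 1" if "0 \<le> u" for u using assms that unfolding good_def by blast
  fix n :: nat and u :: real assume u: "0 \<le> u"
  show "\<bar>f u - (\<Sum>i<n. fps_nth P i * u ^ i)\<bar> \<le> M' n * u ^ n"
    using assms(1) u unfolding good_def
    by (meson assms(2) mult_right_mono order_trans zero_le_power)
qed

lemma triangle_swap:
  fixes F :: "nat \<Rightarrow> nat \<Rightarrow> real"
  shows "(\<Sum>i<n. \<Sum>r\<le>i. F r (i - r)) = (\<Sum>r<n. \<Sum>s<n - r. F r s)"
proof -
  have "(\<Sum>i<n. \<Sum>r\<le>i. F r (i - r)) = (\<Sum>(r, s)\<in>{(i, j). i + j < n}. F r s)"
    by (rule sum.triangle_reindex[symmetric])
  also have "{(i, j). i + j < n} = Sigma {..<n} (\<lambda>r. {..<n - r})" by auto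
  also have "(\<Sum>(r, s)\<in>Sigma {..<n} (\<lambda>r. {..<n - r}). F r s) = (\<Sum>r<n. \<Sum>s<n - r. F r s)"
    by (rule sum.Sigma[symmetric]) auto
  finally show ?thesis .
qed

lemma good_mult:
  assumes P: "good P f M" and Q: "good Q g N"
  shows "good (P * Q) (\<lambda>u. f u * g u) (conv M N)"
  unfolding good_def
proof (intro conjI allI impI)
  show "fps_nth (P * Q) 0 = 1" using P Q by (simp add: good_def)
  show "cm (P * Q) (conv M N)" using P Q by (intro cm_mult) (auto simp: good_def)
  show "\<bar>f u * g u\<bar> \<le> 1" if "0 \<le> u" for u
    using P Q that unfolding good_def by (simp add: abs_mult mult_le_one)
  fix n :: nat and u :: real assume u: "0 \<le> u"
  define PP where "PP k = (\<Sum>i<k. fps_nth P i * u ^ i)" for k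
  define QQ where "QQ k = (\<Sum>i<k. fps_nth Q i * u ^ i)" for k
  have PQ: "(\<Sum>i<n. fps_nth (P * Q) i * u ^ i) = (\<Sum>r<n. fps_nth P r * u ^ r * QQ (n - r))"
  proof -
    have "(\<Sum>i<n. fps_nth (P * Q) i * u ^ i) =
          (\<Sum>i<n. \<Sum>r\<le>i. (fps_nth P r * u ^ r) * (fps_nth Q (i - r) * u ^ (i - r)))"
    proof (rule sum.cong[OF refl])
      fix i
      have "fps_nth (P * Q) i * u ^ i = (\<Sum>r\<le>i. fps_nth P r * fps_nth Q (i - r) * u ^ i)"
        by (simp add: fps_mult_nth atLeast0AtMost sum_distrib_right)
      also have "\<dots> = (\<Sum>r\<le>i. (fps_nth P r * u ^ r) * (fps_nth Q (i - r) * u ^ (i - r)))"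
      proof (rule sum.cong[OF refl])
        fix r assume "r \<in> {..i}"
        hence "u ^ i = u ^ r * u ^ (i - r)" by (simp flip: power_add)
        thus "fps_nth P r * fps_nth Q (i - r) * u ^ i = (fps_nth P r * u ^ r) * (fps_nth Q (i - r) * u ^ (i - r))"
          by simp
      qed
      finally show "fps_nth (P * Q) i * u ^ i = (\<Sum>r\<le>i. (fps_nth P r * u ^ r) * (fps_nth Q (i - r) * u ^ (i - r)))" .
    qed
    also have "\<dots> = (\<Sum>r<n. \<Sum>s<n - r. (fps_nth P r * u ^ r) * (fps_nth Q s * u ^ s))"
      by (rule triangle_swap)
    also have "\<dots> = (\<Sum>r<n. fps_nth P r * u ^ r * QQ (n - r))"
      by (simp add: QQ_def sum_distrib_left)
    finally show ?thesis .
  qed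
  have ident: "f u * g u - (\<Sum>i<n. fps_nth (P * Q) i * u ^ i) =
      (f u - PP n) * g u + (\<Sum>r<n. fps_nth P r * u ^ r * (g u - QQ (n - r)))"
    unfolding PQ by (simp add: PP_def algebra_simps sum_subtractf sum_distrib_right sum_distrib_left)
  have b1: "\<bar>(f u - PP n) * g u\<bar> \<le> M n * u ^ n"
  proof -
    have "\<bar>f u - PP n\<bar> \<le> M n * u ^ n" using P u unfolding good_def PP_def by blast
    moreover have "\<bar>g u\<bar> \<le> 1" using Q u unfolding good_def by blast
    ultimately show ?thesis by (simp add: abs_mult mult_le_one) (metis abs_ge_zero mult_left_le order_trans)
  qed
  have b2: "\<bar>fps_nth P r * u ^ r * (g u - QQ (n - r))\<bar> \<le> M r * N (n - r) * u ^ n" if "r < n" for r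
  proof -
    have "\<bar>fps_nth P r\<bar> \<le> M r" using P unfolding good_def cm_def by blast
    moreover have "\<bar>g u - QQ (n - r)\<bar> \<le> N (n - r) * u ^ (n - r)" using Q u unfolding good_def QQ_def by blast
    ultimately have "\<bar>fps_nth P r\<bar> * \<bar>g u - QQ (n - r)\<bar> \<le> M r * (N (n - r) * u ^ (n - r))"
      by (intro mult_mono) auto
    hence ineq: "\<bar>fps_nth P r\<bar> * \<bar>g u - QQ (n - r)\<bar> * u ^ r \<le> M r * (N (n - r) * u ^ (n - r)) * u ^ r"
      using u by (intro mult_right_mono) auto
    have e: "M r * (N (n - r) * u ^ (n - r)) * u ^ r = M r * N (n - r) * u ^ n"
    proof -
      have "u ^ (n - r) * u ^ r = u ^ n" using that by (simp flip: power_add)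
      thus ?thesis by (simp add: mult.assoc)
    qed
    have l: "\<bar>fps_nth P r * u ^ r * (g u - QQ (n - r))\<bar> = \<bar>fps_nth P r\<bar> * \<bar>g u - QQ (n - r)\<bar> * u ^ r"
      using u by (simp add: abs_mult mult_ac)
    show ?thesis unfolding l e[symmetric] by (rule ineq)
  qed
  have "\<bar>f u * g u - (\<Sum>i<n. fps_nth (P * Q) i * u ^ i)\<bar> \<le>
        \<bar>(f u - PP n) * g u\<bar> + (\<Sum>r<n. \<bar>fps_nth P r * u ^ r * (g u - QQ (n - r))\<bar>)"
    unfolding ident by (rule order_trans[OF abs_triangle_ineq add_left_mono[OF sum_abs]])
  also have "\<dots> \<le> M n * u ^ n + (\<Sum>r<n. M r * N (n - r) * u ^ n)"
    by (intro add_mono b1 sum_mono b2) auto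
  also have "\<dots> \<le> M n * N 0 * u ^ n + (\<Sum>r<n. M r * N (n - r) * u ^ n)"
  proof -
    have "1 \<le> N 0" using Q unfolding good_def cm_def by (metis abs_one)
    moreover have "0 \<le> M n" using P unfolding good_def cm_def by (meson abs_ge_zero order_trans)
    ultimately have "M n * u ^ n \<le> M n * N 0 * u ^ n" using u
      by (intro mult_right_mono) (auto simp: mult_le_cancel_left1)
    thus ?thesis by simp
  qed
  also have "\<dots> = conv M N n * u ^ n"
    by (simp add: conv_def lessThan_Suc_atMost[symmetric] sum_distrib_right distrib_right)
  finally show "\<bar>f u * g u - (\<Sum>i<n. fps_nth (P * Q) i * u ^ i)\<bar> \<le> conv M N n * u ^ n" .
qed

lemma factor_good:
  fixes p q K :: real
  assumes p0: "0 \<le> p" and pq: "p \<le> q" and qK: "q \<le> K"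
  shows "good ((1 + fps_const p * fps_X) * psi q) (\<lambda>u. (1 + p * u) / (1 + q * u)) (\<lambda>n. K ^ n)"
proof -
  let ?P = "(1 + fps_const p * fps_X) * psi q"
  have q0: "0 \<le> q" using p0 pq by linarith
  have cf: "fps_nth ?P n = (if n = 0 then 1 else (- q) ^ n + p * (- q) ^ (n - 1))" for n
    by (simp add: lin_mult_nth psi_def)
  have cmP: "cm ?P (\<lambda>n. K ^ n)"
    unfolding cm_def
  proof
    fix n show "\<bar>fps_nth ?P n\<bar> \<le> K ^ n"
    proof (cases n)
      case 0 thus ?thesis unfolding cf by simp
    next
      case (Suc m)
      have "fps_nth ?P n = (- q) ^ m * (p - q)" using Suc unfolding cf by (simp add: algebra_simps)
      hence "\<bar>fps_nth ?P n\<bar> = q ^ m * (q - p)" using pq q0 by (simp add: abs_mult power_abs)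
      also have "\<dots> \<le> q ^ m * q" using p0 q0 by (intro mult_left_mono) auto
      also have "\<dots> = q ^ n" using Suc by simp
      also have "\<dots> \<le> K ^ n" using q0 qK by (intro power_mono) auto
      finally show ?thesis .
    qed
  qed
  have fb: "\<bar>(1 + p * u) / (1 + q * u)\<bar> \<le> 1" if u: "0 \<le> u" for u
  proof -
    have "p * u \<le> q * u" using pq u by (rule mult_right_mono)
    moreover have "0 \<le> p * u" using p0 u by simp
    ultimately show ?thesis using q0 u by (simp add: abs_div_pos)
  qed
  have rem: "\<bar>(1 + p * u) / (1 + q * u) - (\<Sum>i<n. fps_nth ?P i * u ^ i)\<bar> \<le> K ^ n * u ^ n"
    if u: "0 \<le> u" for n u
  proof (cases n)
    case 0 thus ?thesis using fb[OF u] by simp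
  next
    case (Suc m)
    define x where "x = - q * u"
    define D where "D = 1 + q * u"
    have D1: "1 \<le> D" using q0 u by (simp add: D_def)
    have Dx: "1 - x = D" by (simp add: x_def D_def)
    have tm: "fps_nth ?P i * u ^ i = x ^ i + (if i = 0 then 0 else p * u * x ^ (i - 1))" for i
    proof (cases i)
      case 0 thus ?thesis unfolding cf by simp
    next
      case (Suc j)
      have "(- (q * u)) ^ j = (- q) ^ j * u ^ j" by (metis mult_minus_left power_mult_distrib)
      thus ?thesis using Suc unfolding cf by (simp add: x_def power_mult_distrib algebra_simps)
    qed
    have S: "(\<Sum>i<n. fps_nth ?P i * u ^ i) = (\<Sum>i<Suc m. x ^ i) + p * u * (\<Sum>i<m. x ^ i)"
    proof -
      have "(\<Sum>i<n. fps_nth ?P i * u ^ i) = (\<Sum>i<Suc m. x ^ i) + (\<Sum>i<Suc m. (if i = 0 then 0 else p * u * x ^ (i - 1)))"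
        unfolding tm Suc by (rule sum.distrib)
      also have "(\<Sum>i<Suc m. (if i = 0 then 0 else p * u * x ^ (i - 1))) = (\<Sum>i<m. p * u * x ^ i)"
        by (subst sum.lessThan_Suc_shift) simp
      finally show ?thesis by (simp add: sum_distrib_left)
    qed
    have G: "(\<Sum>i<k. x ^ i) = (1 - x ^ k) / D" for k
      using one_diff_power_eq[of x k] D1 by (simp add: Dx field_simps)
    have "(1 + p * u) / D - (\<Sum>i<n. fps_nth ?P i * u ^ i) = ((1 + p * u) - (1 - x ^ Suc m) - p * u * (1 - x ^ m)) / D"
      unfolding S G using D1 by (simp add: field_simps)
    also have "(1 + p * u) - (1 - x ^ Suc m) - p * u * (1 - x ^ m) = x ^ m * ((p - q) * u)"
      by (simp add: x_def algebra_simps)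
    finally have re: "(1 + p * u) / D - (\<Sum>i<n. fps_nth ?P i * u ^ i) = x ^ m * ((p - q) * u) / D" .
    have "\<bar>x ^ m * ((p - q) * u) / D\<bar> \<le> \<bar>x ^ m * ((p - q) * u)\<bar>"
      using D1 by (simp add: abs_divide divide_le_eq mult_le_cancel_left1)
    also have "\<dots> = (q * u) ^ m * ((q - p) * u)"
      using pq u q0 by (simp add: abs_mult power_abs x_def abs_minus_commute)
    also have "\<dots> \<le> (q * u) ^ m * (q * u)"
      using p0 q0 u by (intro mult_left_mono mult_right_mono) auto
    also have "\<dots> = q ^ n * u ^ n" using Suc by (simp add: power_mult_distrib)
    also have "\<dots> \<le> K ^ n * u ^ n"
      using q0 qK u by (intro mult_right_mono power_mono) auto
    finally show ?thesis using re by (simp add: D_def)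
  qed
  have P0: "fps_nth ?P 0 = 1" unfolding cf by simp
  show ?thesis unfolding good_def
    using P0 cmP fb rem by blast
qed

lemma sum_binom_shift: "(\<Sum>r\<le>n. (r + k - 1) choose r) = (n + k) choose n"
proof (cases k)
  case 0
  have "(\<Sum>r\<le>n. (r - 1) choose r) = 1"
  proof (induction n)
    case 0 thus ?case by simp
  next
    case (Suc n) thus ?case by (simp add: binomial_eq_0)
  qed
  thus ?thesis using 0 by simp
next
  case (Suc k')
  have "(\<Sum>r\<le>n. (r + k - 1) choose r) = (\<Sum>r\<le>n. (k' + r) choose r)"
    using Suc by (intro sum.cong) (auto simp: add.commute)
  also have "\<dots> = Suc (k' + n) choose n" by (rule sum_choose_lower)
  finally show ?thesis using Suc by (simp add: add.commute)
qed

lemma Mk_conv: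
  assumes "0 \<le> K"
  shows "conv (Mk K k) (\<lambda>n. K ^ n) n = Mk K (Suc k) n"
proof -
  have "conv (Mk K k) (\<lambda>n. K ^ n) n = (\<Sum>r\<le>n. real ((r + k - 1) choose r) * K ^ n)"
    unfolding conv_def Mk_def
  proof (rule sum.cong[OF refl])
    fix r assume "r \<in> {..n}"
    hence "K ^ r * K ^ (n - r) = K ^ n" by (simp flip: power_add)
    thus "real ((r + k - 1) choose r) * K ^ r * K ^ (n - r) = real ((r + k - 1) choose r) * K ^ n"
      by (simp add: mult.assoc)
  qed
  also have "\<dots> = real (\<Sum>r\<le>n. (r + k - 1) choose r) * K ^ n"
    by (simp add: sum_distrib_right)
  also have "\<dots> = real ((n + k) choose n) * K ^ n"
    by (simp only: sum_binom_shift)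
  also have "\<dots> = Mk K (Suc k) n"
    by (simp add: Mk_def)
  finally show ?thesis .
qed

lemma Mk_nonneg: "0 \<le> K \<Longrightarrow> 0 \<le> Mk K k n"
  by (simp add: Mk_def)

lemma cm_one: "cm 1 (Mk K 0)"
  unfolding cm_def
proof
  fix i show "\<bar>fps_nth (1::real fps) i\<bar> \<le> Mk K 0 i"
    by (cases i) (simp_all add: Mk_def binomial_eq_0)
qed

lemma good_one: "good 1 (\<lambda>u. 1) (Mk K 0)"
  unfolding good_def
proof (intro conjI allI impI cm_one)
  fix n :: nat and u :: real
  show "\<bar>1 - (\<Sum>i<n. fps_nth (1::real fps) i * u ^ i)\<bar> \<le> Mk K 0 n * u ^ n"
  proof (cases n)
    case 0 thus ?thesis by (simp add: Mk_def)
  next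
    case (Suc m)
    have "(\<Sum>i<n. fps_nth (1::real fps) i * u ^ i) = 1"
      unfolding Suc by (subst sum.lessThan_Suc_shift) simp
    thus ?thesis using Suc by (simp add: Mk_def binomial_eq_0)
  qed
qed simp_all

definition Ffun :: "real \<Rightarrow> real \<Rightarrow> nat \<Rightarrow> real \<Rightarrow> real" where
  "Ffun a b k u = (\<Prod>m<k. (1 + real m / b * u) / (1 + real (Suc m) / a * u))"

lemma good_Phi:
  assumes a: "0 < a" and ab: "a \<le> b" and K: "real k / a \<le> K"
  shows "good (Phi a b k) (Ffun a b k) (Mk K k)"
  using K
proof (induction k)
  case 0
  have "Ffun a b 0 = (\<lambda>u. 1)" by (simp add: Ffun_def[abs_def])
  thus ?case by (simp add: Phi_0 good_one)
next
  case (Suc k)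
  have b: "0 < b" using a ab by linarith
  have K0: "0 \<le> K" using Suc.prems a by (meson divide_nonneg_pos of_nat_0_le_iff order_trans)
  have IH: "good (Phi a b k) (Ffun a b k) (Mk K k)"
    using Suc.IH Suc.prems a by (meson divide_right_mono le_less of_nat_le_iff order_trans le_SucI order_refl)
  have p0: "0 \<le> real k / b" using b by simp
  have pq: "real k / b \<le> real (Suc k) / a"
  proof -
    have "real k / b \<le> real k / a" using a ab by (intro divide_left_mono) auto
    also have "\<dots> \<le> real (Suc k) / a" using a by (intro divide_right_mono) auto
    finally show ?thesis .
  qed
  have F: "good (phi a b k) (\<lambda>u. (1 + real k / b * u) / (1 + real (Suc k) / a * u)) (\<lambda>n. K ^ n)"
    unfolding phi_def using factor_good[OF p0 pq Suc.prems] .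
  have "good (Phi a b k * phi a b k) (\<lambda>u. Ffun a b k u * ((1 + real k / b * u) / (1 + real (Suc k) / a * u)))
          (conv (Mk K k) (\<lambda>n. K ^ n))"
    by (rule good_mult[OF IH F])
  moreover have "Phi a b k * phi a b k = Phi a b (Suc k)"
    using a b by (simp add: Phi_Suc mult.commute)
  moreover have "(\<lambda>u. Ffun a b k u * ((1 + real k / b * u) / (1 + real (Suc k) / a * u))) = Ffun a b (Suc k)"
    by (simp add: Ffun_def[abs_def])
  moreover have "conv (Mk K k) (\<lambda>n. K ^ n) = Mk K (Suc k)"
    by (rule ext) (rule Mk_conv[OF K0])
  ultimately show ?case by simp
qed

lemma cm_Afps:
  assumes b: "0 < b" and K: "real k / b \<le> K" and K0: "0 \<le> K"
  shows "cm (Afps b k) (Mk K k)"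
  using K
proof (induction k)
  case 0 thus ?case by (simp add: Afps_0 cm_one)
next
  case (Suc k)
  have IH: "cm (Afps b k) (Mk K k)"
    using Suc.IH Suc.prems b by (meson divide_right_mono le_less of_nat_le_iff order_trans le_SucI order_refl)
  have "real k / b \<le> real (Suc k) / b" using b by (intro divide_right_mono) auto
  hence c: "0 \<le> real k / b" "real k / b \<le> K"
    using b Suc.prems by auto
  have F: "cm (1 + fps_const (real k / b) * fps_X) (\<lambda>n. K ^ n)"
    unfolding cm_def
  proof
    fix n show "\<bar>fps_nth (1 + fps_const (real k / b) * fps_X) n\<bar> \<le> K ^ n"
      using c K0 by (cases "n = 0"; cases "n = 1") auto
  qed
  have "cm (Afps b k * (1 + fps_const (real k / b) * fps_X)) (conv (Mk K k) (\<lambda>n. K ^ n))"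
    by (rule cm_mult[OF IH F])
  moreover have "conv (Mk K k) (\<lambda>n. K ^ n) = Mk K (Suc k)"
    by (rule ext) (rule Mk_conv[OF K0])
  moreover have "Afps b k * (1 + fps_const (real k / b) * fps_X) = Afps b (Suc k)"
    using b by (simp add: Afps_Suc mult.commute)
  ultimately show ?case by simp
qed

lemma cm_Gfps:
  assumes a: "0 < a" and K: "real k / a \<le> K" and K0: "0 \<le> K"
  shows "cm (Gfps a k) (Mk K k)"
  using K
proof (induction k)
  case 0 thus ?case by (simp add: Gfps_0 cm_one)
next
  case (Suc k)
  have IH: "cm (Gfps a k) (Mk K k)"
    using Suc.IH Suc.prems a by (meson divide_right_mono le_less of_nat_le_iff order_trans le_SucI order_refl)
  have c: "0 \<le> real (Suc k) / a" "real (Suc k) / a \<le> K"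
    using a Suc.prems by auto
  have F: "cm (psi (real (Suc k) / a)) (\<lambda>n. K ^ n)"
    unfolding cm_def
  proof
    fix n show "\<bar>fps_nth (psi (real (Suc k) / a)) n\<bar> \<le> K ^ n"
      using c by (simp add: psi_def power_abs power_mono)
  qed
  have "cm (Gfps a k * psi (real (Suc k) / a)) (conv (Mk K k) (\<lambda>n. K ^ n))"
    by (rule cm_mult[OF IH F])
  moreover have "conv (Mk K k) (\<lambda>n. K ^ n) = Mk K (Suc k)"
    by (rule ext) (rule Mk_conv[OF K0])
  moreover have "Gfps a k * psi (real (Suc k) / a) = Gfps a (Suc k)"
    using a by (simp add: Gfps_Suc mult.commute)
  ultimately show ?case by simp
qed

lemma fact_poch_swap:
  "pochhammer (real p + 1) k * fact p = pochhammer (real k + 1) p * (fact k :: real)"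
proof -
  have "(fact (p + k) :: real) = fact p * pochhammer (1 + real p) k"
    using pochhammer_product'[of "1::real" p k] by (simp add: pochhammer_fact)
  moreover have "(fact (k + p) :: real) = fact k * pochhammer (1 + real k) p"
    using pochhammer_product'[of "1::real" k p] by (simp add: pochhammer_fact)
  ultimately show ?thesis by (simp add: add.commute mult.commute)
qed

lemma pser:
  fixes y :: real
  assumes y: "0 \<le> y" "y < 1"
  shows "(\<lambda>k. pochhammer (real k + 1) p * y ^ k) sums (fact p / (1 - y) ^ Suc p)"
proof -
  have "\<bar>- y\<bar> < 1" using y by simp
  from gen_binomial_real[OF this, of "- (real p + 1)"]
  have s: "(\<lambda>k. (- (real p + 1) gchoose k) * (- y) ^ k) sums (1 + - y) powr (- (real p + 1))" .
  have t: "(- (real p + 1) gchoose k) * (- y) ^ k = pochhammer (real k + 1) p * y ^ k / fact p" for k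
  proof -
    have "(- (real p + 1) gchoose k) * (- y) ^ k = ((-1) ^ k * (-1) ^ k) * (pochhammer (real p + 1) k / fact k) * y ^ k"
      by (simp add: gbinomial_pochhammer power_minus' mult_ac add.commute)
    also have "(-1::real) ^ k * (-1) ^ k = 1" by (simp flip: power_add)
    also have "pochhammer (real p + 1) k / fact k = pochhammer (real k + 1) p / (fact p :: real)"
      using fact_poch_swap[of p k] by (subst frac_eq_eq) auto
    finally show ?thesis by simp
  qed
  have r: "(1 + - y) powr (- (real p + 1)) = 1 / (1 - y) ^ Suc p"
  proof -
    have "(1 + - y) powr (- (real p + 1)) = (1 - y) powr (- real (Suc p))"
      by (rule arg_cong2[where f = "(powr)"]) simp_all
    also have "\<dots> = inverse ((1 - y) powr real (Suc p))" by (rule powr_minus)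
    also have "(1 - y) powr real (Suc p) = (1 - y) ^ Suc p" using y by (intro powr_realpow) simp
    finally show ?thesis by (simp add: inverse_eq_divide)
  qed
  have "(\<lambda>k. pochhammer (real k + 1) p * y ^ k / fact p) sums (1 / (1 - y) ^ Suc p)"
    using s unfolding t r .
  from sums_mult[OF this, of "fact p"]
  show ?thesis by simp
qed

lemma pow_le_poch: "0 \<le> (x::real) \<Longrightarrow> x ^ n \<le> pochhammer x n"
proof (induction n)
  case 0 thus ?case by simp
next
  case (Suc n)
  have "0 \<le> pochhammer x n"
    using Suc.prems by (cases "x = 0") (auto simp: pochhammer_0_left intro: pochhammer_nonneg)
  have "x ^ Suc n = x ^ n * x" by simp
  also have "\<dots> \<le> pochhammer x n * (x + real n)"
    using Suc \<open>0 \<le> pochhammer x n\<close> by (intro mult_mono) auto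
  also have "\<dots> = pochhammer x (Suc n)" by (simp add: pochhammer_Suc)
  finally show ?case .
qed

lemma summable_poly:
  fixes y c :: real
  assumes y: "0 \<le> y" "y < 1" and c: "0 \<le> c"
  shows "summable (\<lambda>k. (real k + c) ^ p * y ^ k)"
proof (rule summable_comparison_test[where g = "\<lambda>k. (c + 1) ^ p * (pochhammer (real k + 1) p * y ^ k)"])
  show "summable (\<lambda>k. (c + 1) ^ p * (pochhammer (real k + 1) p * y ^ k))"
    using pser[OF y, of p] by (intro summable_mult) (auto simp: sums_iff)
  show "\<exists>N. \<forall>n\<ge>N. norm ((real n + c) ^ p * y ^ n) \<le> (c + 1) ^ p * (pochhammer (real n + 1) p * y ^ n)"
  proof (intro exI allI impI)
    fix k :: nat
    have "real k + c \<le> (c + 1) * (real k + 1)" using c by (simp add: algebra_simps)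
    hence "(real k + c) ^ p \<le> ((c + 1) * (real k + 1)) ^ p" using c by (intro power_mono) auto
    also have "\<dots> = (c + 1) ^ p * (real k + 1) ^ p" by (simp add: power_mult_distrib)
    also have "\<dots> \<le> (c + 1) ^ p * pochhammer (real k + 1) p"
      using c by (intro mult_left_mono pow_le_poch) auto
    finally have "(real k + c) ^ p * y ^ k \<le> (c + 1) ^ p * pochhammer (real k + 1) p * y ^ k"
      using y by (intro mult_right_mono) auto
    thus "norm ((real k + c) ^ p * y ^ k) \<le> (c + 1) ^ p * (pochhammer (real k + 1) p * y ^ k)"
      using y c by (simp add: mult_ac)
  qed
qed

lemma poch_sum1:
  fixes y :: real
  assumes y: "0 \<le> y" "y < 1" and m: "m \<ge> 1"
  shows "(\<lambda>k. pochhammer (real k) m * y ^ k) sums (y * fact m / (1 - y) ^ Suc m)"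
proof -
  define f where "f k = pochhammer (real k) m * y ^ k" for k
  have f0: "f 0 = 0" using m by (simp add: f_def pochhammer_0_left)
  have "(\<lambda>k. y * (pochhammer (real k + 1) m * y ^ k)) sums (y * (fact m / (1 - y) ^ Suc m))"
    by (rule sums_mult[OF pser[OF y]])
  moreover have "y * (pochhammer (real k + 1) m * y ^ k) = f (Suc k)" for k
    by (simp add: f_def mult_ac add.commute)
  ultimately have "(\<lambda>k. f (Suc k)) sums (y * fact m / (1 - y) ^ Suc m)" by simp
  from sums_Suc_iff[THEN iffD1, OF this] show ?thesis using f0 by (simp add: f_def)
qed

lemma poch_sum2:
  fixes y :: real
  assumes y: "0 \<le> y" "y < 1" and m: "m \<ge> 2"
  shows "(\<lambda>k. pochhammer (real k - 1) m * y ^ k) sums (y ^ 2 * fact m / (1 - y) ^ Suc m)"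
proof -
  define f where "f k = pochhammer (real k - 1) m * y ^ k" for k
  have f0: "f 0 = 0"
  proof -
    obtain m' where "m = Suc (Suc m')" using m by (metis add_2_eq_Suc le_Suc_ex)
    thus ?thesis by (simp add: f_def pochhammer_rec pochhammer_0_left)
  qed
  have f1: "f 1 = 0" using m by (simp add: f_def pochhammer_0_left)
  have "(\<lambda>k. y ^ 2 * (pochhammer (real k + 1) m * y ^ k)) sums (y ^ 2 * (fact m / (1 - y) ^ Suc m))"
    by (rule sums_mult[OF pser[OF y]])
  moreover have "y ^ 2 * (pochhammer (real k + 1) m * y ^ k) = f (Suc (Suc k))" for k
    by (simp add: f_def power_add mult_ac numeral_2_eq_2 add.commute)
  ultimately have "(\<lambda>k. f (Suc (Suc k))) sums (y ^ 2 * fact m / (1 - y) ^ Suc m)" by simp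
  from sums_Suc_iff[THEN iffD1, OF this]
  have "(\<lambda>k. f (Suc k)) sums (y ^ 2 * fact m / (1 - y) ^ Suc m + f 1)" by simp
  from sums_Suc_iff[THEN iffD1, OF this]
  have "f sums (y ^ 2 * fact m / (1 - y) ^ Suc m + f 1 + f 0)" .
  hence "f sums (y ^ 2 * fact m / (1 - y) ^ Suc m)" unfolding f0 f1 by simp
  thus ?thesis unfolding f_def .
qed

definition Dk :: "nat \<Rightarrow> nat \<Rightarrow> real" where
  "Dk n k = (pochhammer (real k) (2 * n) + pochhammer (real k - 1) (2 * n)) / 2"

lemma Dk_sums:
  fixes y :: real
  assumes y: "0 \<le> y" "y < 1" and n: "n \<ge> 1"
  shows "(\<lambda>k. y ^ k * Dk n k) sums (fact (2 * n) / 2 * (y * (1 + y)) / (1 - y) ^ (2 * n + 1))"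
proof -
  have A: "(\<lambda>k. (pochhammer (real k) (2 * n) * y ^ k + pochhammer (real k - 1) (2 * n) * y ^ k) / 2) sums
        ((y * fact (2 * n) / (1 - y) ^ Suc (2 * n) + y ^ 2 * fact (2 * n) / (1 - y) ^ Suc (2 * n)) / 2)"
    (is "?f sums ?S")
    using n by (intro sums_divide sums_add poch_sum1 poch_sum2 y) auto
  have B: "(y * fact (2 * n) / (1 - y) ^ Suc (2 * n) + y ^ 2 * fact (2 * n) / (1 - y) ^ Suc (2 * n)) / 2
     = fact (2 * n) / 2 * (y * (1 + y)) / (1 - y) ^ (2 * n + 1)"
  proof -
    have gen: "(y * F / D + y ^ 2 * F / D) / 2 = F / 2 * (y * (1 + y)) / D" for F D :: real
      by (cases "D = 0") (simp_all add: field_simps power2_eq_square)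
    show ?thesis using gen[of "fact (2 * n)" "(1 - y) ^ Suc (2 * n)"] by simp
  qed
  have C: "(\<lambda>k. y ^ k * Dk n k) = ?f"
    by (rule ext) (simp add: Dk_def algebra_simps)
  show ?thesis unfolding C B[symmetric] by (rule A)
qed

lemma binom_poch: "real ((n + k - 1) choose n) = pochhammer (real k) n / fact n"
proof (cases k)
  case 0
  show ?thesis
  proof (cases n)
    case 0 thus ?thesis using \<open>k = 0\<close> by simp
  next
    case (Suc n') thus ?thesis using \<open>k = 0\<close> by (simp add: binomial_eq_0 pochhammer_0_left)
  qed
next
  case (Suc k')
  have "real ((n + k - 1) choose n) = (real (n + k') gchoose n)"
    using Suc by (simp add: binomial_gbinomial)
  also have "\<dots> = pochhammer (real (n + k') - real n + 1) n / fact n"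
    by (rule gbinomial_pochhammer')
  also have "real (n + k') - real n + 1 = real k" using Suc by simp
  finally show ?thesis .
qed

lemma Ck_le_Dk:
  assumes n: "n \<ge> 1"
  shows "real ((n + k - 1) choose n) * real k ^ n \<le> Dk n k"
proof (cases "k = 0")
  case True
  have "pochhammer (- 1 :: real) (2 * n) = 0"
    using pochhammer_of_nat_eq_0_iff[of 1 "2 * n"] n by simp
  thus ?thesis using True n by (simp add: Dk_def pochhammer_0_left binomial_eq_0)
next
  case False
  hence k1: "real k \<ge> 1" by simp
  have D2: "0 \<le> pochhammer (real k - 1) (2 * n)"
  proof (cases "k = 1")
    case True thus ?thesis using n by (simp add: pochhammer_0_left)
  next
    case False thus ?thesis using \<open>k \<noteq> 0\<close> by (intro pochhammer_nonneg) simp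
  qed
  show ?thesis
  proof (cases "n = 1")
    case True
    have p1: "pochhammer (real k) (2 * n) = real k * (real k + 1)" using True by (simp add: pochhammer_Suc numeral_2_eq_2)
    have p2: "pochhammer (real k - 1) (2 * n) = (real k - 1) * real k" using True by (simp add: pochhammer_Suc numeral_2_eq_2)
    show ?thesis unfolding Dk_def p1 p2 using True by (simp add: algebra_simps)
  next
    case False
    hence n2: "n \<ge> 2" using n by simp
    have "real ((n + k - 1) choose n) * real k ^ n = pochhammer (real k) n * real k ^ n / fact n"
      unfolding binom_poch by simp
    also have "\<dots> \<le> pochhammer (real k) n * pochhammer (real k + real n) n / fact n"
    proof -
      have "real k ^ n \<le> (real k + real n) ^ n" by (intro power_mono) auto
      also have "\<dots> \<le> pochhammer (real k + real n) n" by (intro pow_le_poch) auto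
      finally have "real k ^ n \<le> pochhammer (real k + real n) n" .
      moreover have "0 \<le> pochhammer (real k) n" using k1 by (intro pochhammer_nonneg) auto
      ultimately show ?thesis by (intro divide_right_mono mult_left_mono) auto
    qed
    also have "\<dots> = pochhammer (real k) (2 * n) / fact n"
      by (simp add: pochhammer_product' mult_2)
    also have "\<dots> \<le> pochhammer (real k) (2 * n) / 2"
    proof -
      have "(2::real) \<le> fact n"
        using fact_mono[OF n2, where 'a=real] by simp
      moreover have "0 \<le> pochhammer (real k) (2 * n)" using k1 by (intro pochhammer_nonneg) auto
      ultimately show ?thesis by (intro divide_left_mono) auto
    qed
    also have "\<dots> \<le> Dk n k" using D2 by (simp add: Dk_def)
    finally show ?thesis .
  qed
qed

lemma fac_eq:
  fixes a b t :: real
  assumes a: "0 < a" and b: "0 < b" and t: "0 < t"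
  shows "(t * b + real k) / (a * t + 1 + real k) =
         b / a * ((1 + real k / b * (1 / t)) / (1 + real (Suc k) / a * (1 / t)))"
proof -
  have "0 < a * t" using a t by simp
  hence d1: "a * t + 1 + real k > 0" by (simp add: add_pos_nonneg)
  have e1: "1 + real k / b * (1 / t) = (t * b + real k) / (b * t)" using b t by (simp add: field_simps)
  have e2: "1 + real (Suc k) / a * (1 / t) = (a * t + 1 + real k) / (a * t)" using a t by (simp add: field_simps)
  have "b / a * ((t * b + real k) / (b * t) / ((a * t + 1 + real k) / (a * t))) =
        b / a * ((t * b + real k) * (a * t) / ((b * t) * (a * t + 1 + real k)))"
    by (simp only: divide_divide_times_eq)
  also have "\<dots> = (t * b + real k) / (a * t + 1 + real k) * ((a * b * t) / (a * b * t))"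
    by (simp add: mult_ac)
  also have "(a * b * t) / (a * b * t) = 1" using a b t by simp
  finally show ?thesis unfolding e1 e2 by simp
qed

lemma poch_ratio:
  fixes a b t :: real
  assumes a: "0 < a" and b: "0 < b" and t: "0 < t"
  shows "pochhammer (t * b) k / pochhammer (a * t + 1) k = (b / a) ^ k * Ffun a b k (1 / t)"
proof (induction k)
  case 0 thus ?case by (simp add: Ffun_def)
next
  case (Suc k)
  have at: "0 < a * t" using a t by simp
  have "0 < pochhammer (a * t + 1) k" using at by (intro pochhammer_pos) linarith
  hence p: "pochhammer (a * t + 1) k \<noteq> 0" by simp
  have "0 \<le> real k" by simp
  hence d1: "a * t + 1 + real k \<noteq> 0" using at by linarith
  have "pochhammer (t * b) (Suc k) / pochhammer (a * t + 1) (Suc k) =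
        (pochhammer (t * b) k / pochhammer (a * t + 1) k) * ((t * b + real k) / (a * t + 1 + real k))"
    using p d1 by (simp add: pochhammer_Suc field_simps)
  also have "\<dots> = (b / a) ^ k * Ffun a b k (1 / t) * (b / a * ((1 + real k / b * (1 / t)) / (1 + real (Suc k) / a * (1 / t))))"
    unfolding Suc fac_eq[OF a b t] ..
  also have "\<dots> = (b / a) ^ Suc k * Ffun a b (Suc k) (1 / t)"
    by (simp add: Ffun_def mult_ac)
  finally show ?case .
qed

lemma Ffun_good:
  assumes "0 < a" "a \<le> b"
  shows "good (Phi a b k) (Ffun a b k) (Mk (real k / a) k)"
  using good_Phi[OF assms order_refl] .

lemma Ffun_bound:
  assumes "0 < a" "a \<le> b" "0 \<le> u"
  shows "\<bar>Ffun a b k u\<bar> \<le> 1"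
  using Ffun_good[OF assms(1,2), of k] assms(3) unfolding good_def by blast

lemma Ffun_rem:
  assumes "0 < a" "a \<le> b" "0 \<le> u"
  shows "\<bar>Ffun a b k u - (\<Sum>i<n. fps_nth (Phi a b k) i * u ^ i)\<bar> \<le> Mk (real k / a) k n * u ^ n"
  using Ffun_good[OF assms(1,2), of k] assms(3) unfolding good_def by blast

lemma Mk_le_Dk:
  assumes n: "n \<ge> 1" and a: "0 < a"
  shows "Mk (real k / a) k n \<le> Dk n k / a ^ n"
proof -
  have "Mk (real k / a) k n = real ((n + k - 1) choose n) * real k ^ n / a ^ n"
    by (simp add: Mk_def power_divide)
  also have "\<dots> \<le> Dk n k / a ^ n"
    using a by (intro divide_right_mono Ck_le_Dk n) auto
  finally show ?thesis .
qed

lemma binom_le_pow2: "(n + k - 1) choose n \<le> (n + k) ^ n"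
proof (cases "n \<le> n + k - 1")
  case True
  hence "(n + k - 1) choose n \<le> (n + k - 1) ^ n" by (rule binomial_le_pow)
  also have "\<dots> \<le> (n + k) ^ n" by (intro power_mono) auto
  finally show ?thesis .
next
  case False thus ?thesis by (simp add: binomial_eq_0)
qed

lemma Mk_le_poly:
  assumes c: "0 < c"
  shows "Mk (real k / c) k n \<le> (real k + real n) ^ (2 * n) / c ^ n"
proof -
  have "real ((n + k - 1) choose n) \<le> (real k + real n) ^ n"
    using binom_le_pow2[of n k] by (metis add.commute of_nat_add of_nat_le_iff of_nat_power)
  moreover have "real k ^ n \<le> (real k + real n) ^ n" by (intro power_mono) auto
  ultimately have "real ((n + k - 1) choose n) * real k ^ n \<le> (real k + real n) ^ n * (real k + real n) ^ n"
    by (intro mult_mono) auto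
  hence "real ((n + k - 1) choose n) * real k ^ n / c ^ n \<le> (real k + real n) ^ n * (real k + real n) ^ n / c ^ n"
    using c by (intro divide_right_mono) auto
  thus ?thesis by (simp add: Mk_def power_divide mult_2 power_add)
qed

lemma gamma_bound:
  assumes a: "0 < a"
  shows "\<bar>gamma_coef a k j\<bar> \<le> (real k + real j) ^ (2 * j) / a ^ j"
proof -
  have "\<bar>gamma_coef a k j\<bar> = \<bar>fps_nth (Gfps a k) j\<bar>" by (simp add: gamma_coef_eq Gfps_def)
  also have "\<dots> \<le> Mk (real k / a) k j" using cm_Gfps[OF a order_refl] a unfolding cm_def by simp
  also have "\<dots> \<le> (real k + real j) ^ (2 * j) / a ^ j" by (rule Mk_le_poly[OF a])
  finally show ?thesis .
qed

lemma alpha_bound: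
  assumes b: "0 < 1 + \<beta>"
  shows "\<bar>alpha_coef \<beta> k j\<bar> \<le> (real k + real j) ^ (2 * j) / (1 + \<beta>) ^ j"
proof -
  have "\<bar>alpha_coef \<beta> k j\<bar> = \<bar>fps_nth (Afps (1 + \<beta>) k) j\<bar>" by (simp add: alpha_coef_eq Afps_def)
  also have "\<dots> \<le> Mk (real k / (1 + \<beta>)) k j" using cm_Afps[OF b order_refl] b unfolding cm_def by simp
  also have "\<dots> \<le> (real k + real j) ^ (2 * j) / (1 + \<beta>) ^ j" by (rule Mk_le_poly[OF b])
  finally show ?thesis .
qed

lemma term_summable:
  assumes a: "0 < a" and b: "0 < 1 + \<beta>" and y: "0 \<le> y" "y < 1" and j: "j \<le> i"
  shows "summable (\<lambda>k. gamma_coef a k j * alpha_coef \<beta> k (i - j) / t ^ i * y ^ k)"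
proof (rule summable_comparison_test[where g = "\<lambda>k. (1 / (a ^ j * (1 + \<beta>) ^ (i - j) * \<bar>t\<bar> ^ i)) * ((real k + real i) ^ (2 * i) * y ^ k)"])
  show "summable (\<lambda>k. (1 / (a ^ j * (1 + \<beta>) ^ (i - j) * \<bar>t\<bar> ^ i)) * ((real k + real i) ^ (2 * i) * y ^ k))"
    by (intro summable_mult summable_poly y) simp
  show "\<exists>N. \<forall>k\<ge>N. norm (gamma_coef a k j * alpha_coef \<beta> k (i - j) / t ^ i * y ^ k) \<le>
      (1 / (a ^ j * (1 + \<beta>) ^ (i - j) * \<bar>t\<bar> ^ i)) * ((real k + real i) ^ (2 * i) * y ^ k)"
  proof (intro exI allI impI)
    fix k :: nat
    have g: "\<bar>gamma_coef a k j\<bar> \<le> (real k + real i) ^ (2 * j) / a ^ j"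
    proof -
      have "(real k + real j) ^ (2 * j) \<le> (real k + real i) ^ (2 * j)" using j by (intro power_mono) auto
      thus ?thesis using gamma_bound[OF a, of k j] a
        by (meson divide_right_mono order_trans zero_le_power less_imp_le)
    qed
    have al: "\<bar>alpha_coef \<beta> k (i - j)\<bar> \<le> (real k + real i) ^ (2 * (i - j)) / (1 + \<beta>) ^ (i - j)"
    proof -
      have "(real k + real (i - j)) ^ (2 * (i - j)) \<le> (real k + real i) ^ (2 * (i - j))" using j by (intro power_mono) auto
      thus ?thesis using alpha_bound[OF b, of k "i - j"] b
        by (meson divide_right_mono order_trans zero_le_power less_imp_le)
    qed
    have "\<bar>gamma_coef a k j * alpha_coef \<beta> k (i - j)\<bar> \<le>
          (real k + real i) ^ (2 * j) / a ^ j * ((real k + real i) ^ (2 * (i - j)) / (1 + \<beta>) ^ (i - j))"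
      unfolding abs_mult using a by (intro mult_mono g al) auto
    also have "\<dots> = (real k + real i) ^ (2 * i) / (a ^ j * (1 + \<beta>) ^ (i - j))"
    proof -
      have "(real k + real i) ^ (2 * j) * (real k + real i) ^ (2 * (i - j)) = (real k + real i) ^ (2 * i)"
      proof -
        have "2 * j + 2 * (i - j) = 2 * i" using j by simp
        thus ?thesis by (simp flip: power_add)
      qed
      thus ?thesis by (simp add: field_simps)
    qed
    finally have gb: "\<bar>gamma_coef a k j * alpha_coef \<beta> k (i - j)\<bar> \<le> (real k + real i) ^ (2 * i) / (a ^ j * (1 + \<beta>) ^ (i - j))" .
    have "norm (gamma_coef a k j * alpha_coef \<beta> k (i - j) / t ^ i * y ^ k) =
          \<bar>gamma_coef a k j * alpha_coef \<beta> k (i - j)\<bar> / \<bar>t\<bar> ^ i * y ^ k"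
      using y by (simp add: abs_mult abs_divide power_abs)
    also have "\<dots> \<le> (real k + real i) ^ (2 * i) / (a ^ j * (1 + \<beta>) ^ (i - j)) / \<bar>t\<bar> ^ i * y ^ k"
      using y by (intro mult_right_mono divide_right_mono gb) auto
    also have "\<dots> = (1 / (a ^ j * (1 + \<beta>) ^ (i - j) * \<bar>t\<bar> ^ i)) * ((real k + real i) ^ (2 * i) * y ^ k)"
      by simp
    finally show "norm (gamma_coef a k j * alpha_coef \<beta> k (i - j) / t ^ i * y ^ k) \<le>
      (1 / (a ^ j * (1 + \<beta>) ^ (i - j) * \<bar>t\<bar> ^ i)) * ((real k + real i) ^ (2 * i) * y ^ k)" .
  qed
qed

lemma hyp_eq:
  assumes a: "0 < a" and b: "0 < b" and t: "0 < t"
  shows "hyp2f1 1 (t * b) (a * t + 1) x = (\<Sum>k. (b / a * x) ^ k * Ffun a b k (1 / t))"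
  unfolding hyp2f1_def
proof (rule arg_cong[where f = suminf], rule ext)
  fix k
  have "pochhammer 1 k * pochhammer (t * b) k / pochhammer (a * t + 1) k * x ^ k / fact k
        = (pochhammer (t * b) k / pochhammer (a * t + 1) k) * x ^ k * (fact k / fact k)"
    by (simp add: pochhammer_fact[symmetric])
  also have "\<dots> = (b / a) ^ k * Ffun a b k (1 / t) * x ^ k"
    unfolding poch_ratio[OF a b t] by simp
  also have "\<dots> = ((b / a) ^ k * x ^ k) * Ffun a b k (1 / t)"
    by (simp only: mult_ac)
  also have "\<dots> = (b / a * x) ^ k * Ffun a b k (1 / t)"
    by (simp only: power_mult_distrib)
  finally show "pochhammer 1 k * pochhammer (t * b) k / pochhammer (a * t + 1) k * x ^ k / fact k
        = (b / a * x) ^ k * Ffun a b k (1 / t)" .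
qed

lemma Phi_nth_coef:
  "fps_nth (Phi a (1 + \<beta>) k) i = (\<Sum>j\<le>i. gamma_coef a k j * alpha_coef \<beta> k (i - j))"
  by (simp add: Phi_nth gamma_coef_eq alpha_coef_eq)

lemma S_eq:
  assumes a: "0 < a" and b: "0 < 1 + \<beta>" and y: "0 \<le> y" "y < 1"
  shows "(\<Sum>i<n. \<Sum>j\<le>i. \<Sum>k. gamma_coef a k j * alpha_coef \<beta> k (i - j) / t ^ i * y ^ k)
           = (\<Sum>k. y ^ k * (\<Sum>i<n. fps_nth (Phi a (1 + \<beta>) k) i * (1 / t) ^ i))"
    and "summable (\<lambda>k. y ^ k * (\<Sum>i<n. fps_nth (Phi a (1 + \<beta>) k) i * (1 / t) ^ i))"
proof -
  define T where "T i j k = gamma_coef a k j * alpha_coef \<beta> k (i - j) / t ^ i * y ^ k" for i j k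
  have sT: "summable (T i j)" if "j \<in> {..i}" for i j
    unfolding T_def using that by (intro term_summable a b y) auto
  have sI: "summable (\<lambda>k. \<Sum>j\<le>i. T i j k)" for i
    by (rule summable_sum) (rule sT)
  have pw: "(\<Sum>i<n. \<Sum>j\<le>i. T i j k) = y ^ k * (\<Sum>i<n. fps_nth (Phi a (1 + \<beta>) k) i * (1 / t) ^ i)" for k
  proof -
    have "(\<Sum>j\<le>i. T i j k) = y ^ k * (fps_nth (Phi a (1 + \<beta>) k) i * (1 / t) ^ i)" for i
      unfolding Phi_nth_coef T_def by (simp add: sum_distrib_left sum_distrib_right power_one_over sum_divide_distrib mult_ac)
    thus ?thesis by (simp add: sum_distrib_left)
  qed
  have "(\<Sum>i<n. \<Sum>j\<le>i. \<Sum>k. T i j k) = (\<Sum>i<n. \<Sum>k. \<Sum>j\<le>i. T i j k)"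
    by (intro sum.cong refl suminf_sum[symmetric] sT)
  also have "\<dots> = (\<Sum>k. \<Sum>i<n. \<Sum>j\<le>i. T i j k)"
    by (intro suminf_sum[symmetric] sI)
  also have "\<dots> = (\<Sum>k. y ^ k * (\<Sum>i<n. fps_nth (Phi a (1 + \<beta>) k) i * (1 / t) ^ i))"
    unfolding pw ..
  finally show "(\<Sum>i<n. \<Sum>j\<le>i. \<Sum>k. gamma_coef a k j * alpha_coef \<beta> k (i - j) / t ^ i * y ^ k)
           = (\<Sum>k. y ^ k * (\<Sum>i<n. fps_nth (Phi a (1 + \<beta>) k) i * (1 / t) ^ i))"
    unfolding T_def .
  have "summable (\<lambda>k. \<Sum>i<n. \<Sum>j\<le>i. T i j k)"
    by (rule summable_sum) (rule sI)
  thus "summable (\<lambda>k. y ^ k * (\<Sum>i<n. fps_nth (Phi a (1 + \<beta>) k) i * (1 / t) ^ i))"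
    unfolding pw .
qed

lemma main_bound:
  fixes \<beta> a x t :: real and n :: nat
  assumes \<beta>: "\<beta> \<ge> 0" and a: "0 < a" "a \<le> 1 + \<beta>" and x: "0 \<le> x"
    and y1: "(1 + \<beta>) / a * x < 1" and t: "t > 0" and n: "n \<ge> 1"
  shows "\<bar>hyp2f1 1 (t * (1 + \<beta>)) (a * t + 1) x
              - (\<Sum>i<n. \<Sum>j\<le>i. \<Sum>k. gamma_coef a k j * alpha_coef \<beta> k (i - j) / t ^ i
                                        * ((1 + \<beta>) / a * x) ^ k)\<bar>
           \<le> fact (2 * n) / 2 * ((1 + \<beta>) * x * (a + (1 + \<beta>) * x))
               / (a ^ (n + 2) * (1 - (1 + \<beta>) * x / a) ^ (2 * n + 1)) * (1 / t ^ n)"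
proof -
  define y where "y = (1 + \<beta>) / a * x"
  define u where "u = 1 / t"
  have b: "0 < 1 + \<beta>" using \<beta> by simp
  have y0: "0 \<le> y" using b a x by (simp add: y_def)
  have y1': "y < 1" using y1 by (simp add: y_def)
  have u0: "0 \<le> u" using t by (simp add: u_def)
  define F where "F k = Ffun a (1 + \<beta>) k u" for k
  define P where "P k = (\<Sum>i<n. fps_nth (Phi a (1 + \<beta>) k) i * u ^ i)" for k
  have hF: "hyp2f1 1 (t * (1 + \<beta>)) (a * t + 1) x = (\<Sum>k. y ^ k * F k)"
    unfolding hyp_eq[OF a(1) b t] y_def F_def u_def ..
  have sF: "summable (\<lambda>k. y ^ k * F k)"
  proof (rule summable_comparison_test[where g = "\<lambda>k. y ^ k"])
    show "summable (\<lambda>k. y ^ k)" using y0 y1' by (intro summable_geometric) simp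
    show "\<exists>N. \<forall>k\<ge>N. norm (y ^ k * F k) \<le> y ^ k"
    proof (intro exI allI impI)
      fix k :: nat
      have "y ^ k * \<bar>F k\<bar> \<le> y ^ k"
        using mult_left_le[OF Ffun_bound[OF a u0, of k] zero_le_power[OF y0, of k]] by (simp add: F_def)
      thus "norm (y ^ k * F k) \<le> y ^ k" using y0 by (simp add: abs_mult)
    qed
  qed
  have hS: "(\<Sum>i<n. \<Sum>j\<le>i. \<Sum>k. gamma_coef a k j * alpha_coef \<beta> k (i - j) / t ^ i * y ^ k) = (\<Sum>k. y ^ k * P k)"
    using S_eq(1)[OF a(1) b y0 y1', where n = n and t = t] by (simp add: P_def u_def)
  have sP: "summable (\<lambda>k. y ^ k * P k)"
    using S_eq(2)[OF a(1) b y0 y1', where n = n and t = t] by (simp add: P_def u_def)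
  define C where "C = u ^ n / a ^ n"
  have C0: "0 \<le> C" using u0 a by (simp add: C_def)
  have gs: "(\<lambda>k. y ^ k * Dk n k * C) sums (fact (2 * n) / 2 * (y * (1 + y)) / (1 - y) ^ (2 * n + 1) * C)"
    by (rule sums_mult2[OF Dk_sums[OF y0 y1' n]])
  have bnd: "\<bar>y ^ k * F k - y ^ k * P k\<bar> \<le> y ^ k * Dk n k * C" for k
  proof -
    have "\<bar>F k - P k\<bar> \<le> Mk (real k / a) k n * u ^ n"
      unfolding F_def P_def by (rule Ffun_rem[OF a u0])
    also have "\<dots> \<le> Dk n k / a ^ n * u ^ n"
      using u0 by (intro mult_right_mono Mk_le_Dk n a(1)) auto
    finally have "\<bar>F k - P k\<bar> \<le> Dk n k * C" by (simp add: C_def)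
    hence "y ^ k * \<bar>F k - P k\<bar> \<le> y ^ k * (Dk n k * C)"
      using y0 by (intro mult_left_mono) auto
    thus ?thesis using y0 by (simp add: abs_mult right_diff_distrib[symmetric] mult.assoc)
  qed
  have sA: "summable (\<lambda>k. \<bar>y ^ k * F k - y ^ k * P k\<bar>)"
    by (rule summable_comparison_test[OF _ sums_summable[OF gs]]) (use bnd in auto)
  have "\<bar>hyp2f1 1 (t * (1 + \<beta>)) (a * t + 1) x
              - (\<Sum>i<n. \<Sum>j\<le>i. \<Sum>k. gamma_coef a k j * alpha_coef \<beta> k (i - j) / t ^ i
                                        * ((1 + \<beta>) / a * x) ^ k)\<bar>
        = \<bar>\<Sum>k. y ^ k * F k - y ^ k * P k\<bar>"
    unfolding hF y_def[symmetric] hS by (simp add: suminf_diff[OF sF sP])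
  also have "\<dots> \<le> (\<Sum>k. \<bar>y ^ k * F k - y ^ k * P k\<bar>)"
    by (rule summable_rabs[OF sA])
  also have "\<dots> \<le> (\<Sum>k. y ^ k * Dk n k * C)"
    by (rule suminf_le[OF bnd sA sums_summable[OF gs]])
  also have "\<dots> = fact (2 * n) / 2 * (y * (1 + y)) / (1 - y) ^ (2 * n + 1) * C"
    using gs by (simp add: sums_iff)
  also have "\<dots> = fact (2 * n) / 2 * ((1 + \<beta>) * x * (a + (1 + \<beta>) * x))
               / (a ^ (n + 2) * (1 - (1 + \<beta>) * x / a) ^ (2 * n + 1)) * (1 / t ^ n)"
  proof -
    have bx: "(1 + \<beta>) * x = a * y" using a by (simp add: y_def)
    have e1: "(1 + \<beta>) * x * (a + (1 + \<beta>) * x) = (a * a) * (y * (1 + y))"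
      unfolding bx by (simp add: algebra_simps power2_eq_square)
    have e2: "(1 + \<beta>) * x / a = y" using a by (simp add: y_def)
    have e3: "a ^ (n + 2) = (a * a) * a ^ n" by (simp add: power_add power2_eq_square)
    have ne: "a * a \<noteq> 0" "a ^ n \<noteq> 0" "(1 - y) ^ (2 * n + 1) \<noteq> 0" "t ^ n \<noteq> 0"
      using a y1' t by auto
    show ?thesis unfolding e1 e2 e3 C_def u_def using ne
      by (simp add: power_one_over field_simps power2_eq_square)
  qed
  finally show ?thesis .
qed

lemma bigo_part:
  fixes \<beta> a x :: real and n :: nat
  assumes \<beta>: "\<beta> \<ge> 0" and a: "0 < a" "a \<le> 1 + \<beta>" and x: "0 \<le> x"
    and y1: "(1 + \<beta>) / a * x < 1"
  shows "(\<lambda>t::real. hyp2f1 1 (t * (1 + \<beta>)) (a * t + 1) x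
                       - (\<Sum>i<n. expansion_coef \<beta> a x i / t ^ i))
                   \<in> O[at_top](\<lambda>t. 1 / t ^ n)"
proof (cases "n = 0")
  case True
  define y where "y = (1 + \<beta>) / a * x"
  have b: "0 < 1 + \<beta>" using \<beta> by simp
  have y0: "0 \<le> y" using b a x by (simp add: y_def)
  have y1': "y < 1" using y1 by (simp add: y_def)
  have "eventually (\<lambda>t. norm (hyp2f1 1 (t * (1 + \<beta>)) (a * t + 1) x - (\<Sum>i<n. expansion_coef \<beta> a x i / t ^ i))
          \<le> (1 / (1 - y)) * norm (1 / t ^ n)) at_top"
    using eventually_gt_at_top[of 0]
  proof eventually_elim
    case (elim t)
    have u0: "0 \<le> 1 / t" using elim by simp
    have sg: "summable (\<lambda>k. y ^ k)" using y0 y1' by (intro summable_geometric) simp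
    have bnd: "norm (y ^ k * Ffun a (1 + \<beta>) k (1 / t)) \<le> y ^ k" for k
      using mult_left_le[OF Ffun_bound[OF a u0, of k] zero_le_power[OF y0, of k]] y0 by (simp add: abs_mult)
    have sa: "summable (\<lambda>k. \<bar>y ^ k * Ffun a (1 + \<beta>) k (1 / t)\<bar>)"
      by (rule summable_comparison_test[OF _ sg]) (use bnd in auto)
    have "\<bar>\<Sum>k. y ^ k * Ffun a (1 + \<beta>) k (1 / t)\<bar> \<le> (\<Sum>k. \<bar>y ^ k * Ffun a (1 + \<beta>) k (1 / t)\<bar>)"
      by (rule summable_rabs[OF sa])
    also have "\<dots> \<le> (\<Sum>k. y ^ k)"
      by (rule suminf_le[OF _ sa sg]) (use bnd in auto)
    also have "(\<Sum>k. y ^ k) = 1 / (1 - y)" using y0 y1' by (simp add: suminf_geometric)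
    finally show ?case
      using True hyp_eq[OF a(1) b elim, of x] by (simp add: y_def)
  qed
  thus ?thesis by (rule bigoI)
next
  case False
  hence n: "n \<ge> 1" by simp
  define y where "y = (1 + \<beta>) / a * x"
  have b: "0 < 1 + \<beta>" using \<beta> by simp
  have y0: "0 \<le> y" using b a x by (simp add: y_def)
  have y1': "y < 1" using y1 by (simp add: y_def)
  have ex: "(\<Sum>i<n. expansion_coef \<beta> a x i / t ^ i) =
        (\<Sum>i<n. \<Sum>j\<le>i. \<Sum>k. gamma_coef a k j * alpha_coef \<beta> k (i - j) / t ^ i * ((1 + \<beta>) / a * x) ^ k)" for t
  proof (rule sum.cong[OF refl])
    fix i assume "i \<in> {..<n}"
    have s: "summable (\<lambda>k. gamma_coef a k j * alpha_coef \<beta> k (i - j) * y ^ k)" if "j \<le> i" for j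
      using term_summable[OF a(1) b y0 y1' that, of 1] by simp
    have "expansion_coef \<beta> a x i / t ^ i = (\<Sum>j\<le>i. (\<Sum>k. gamma_coef a k j * alpha_coef \<beta> k (i - j) * y ^ k) / t ^ i)"
      by (simp add: expansion_coef_def sum_divide_distrib y_def)
    also have "\<dots> = (\<Sum>j\<le>i. \<Sum>k. gamma_coef a k j * alpha_coef \<beta> k (i - j) / t ^ i * y ^ k)"
    proof (rule sum.cong[OF refl])
      fix j assume "j \<in> {..i}"
      hence "(\<Sum>k. gamma_coef a k j * alpha_coef \<beta> k (i - j) * y ^ k) / t ^ i =
             (\<Sum>k. gamma_coef a k j * alpha_coef \<beta> k (i - j) * y ^ k / t ^ i)"
        using s by (simp add: suminf_divide)
      thus "(\<Sum>k. gamma_coef a k j * alpha_coef \<beta> k (i - j) * y ^ k) / t ^ i =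
             (\<Sum>k. gamma_coef a k j * alpha_coef \<beta> k (i - j) / t ^ i * y ^ k)"
        by (simp add: mult_ac)
    qed
    finally show "expansion_coef \<beta> a x i / t ^ i =
        (\<Sum>j\<le>i. \<Sum>k. gamma_coef a k j * alpha_coef \<beta> k (i - j) / t ^ i * ((1 + \<beta>) / a * x) ^ k)"
      by (simp add: y_def)
  qed
  define c where "c = fact (2 * n) / 2 * ((1 + \<beta>) * x * (a + (1 + \<beta>) * x))
               / (a ^ (n + 2) * (1 - (1 + \<beta>) * x / a) ^ (2 * n + 1))"
  have "eventually (\<lambda>t. norm (hyp2f1 1 (t * (1 + \<beta>)) (a * t + 1) x - (\<Sum>i<n. expansion_coef \<beta> a x i / t ^ i))
          \<le> c * norm (1 / t ^ n)) at_top"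
    using eventually_gt_at_top[of 0]
  proof eventually_elim
    case (elim t)
    show ?case unfolding ex
      using main_bound[OF \<beta> a x y1 elim n] elim by (simp add: c_def)
  qed
  thus ?thesis by (rule bigoI)
qed

theorem theorem5:
  fixes \<beta> a x :: real
  assumes "\<beta> \<ge> 0" and "0 < a" and "a \<le> 1 + \<beta>"
    and "0 \<le> x" and "x \<le> (1 + \<beta>) / a * x" and "(1 + \<beta>) / a * x < 1"
  shows "(\<forall>n::nat. \<forall>t::real. n \<ge> 1 \<longrightarrow> t > 0 \<longrightarrow>
           \<bar>hyp2f1 1 (t * (1 + \<beta>)) (a * t + 1) x
              - (\<Sum>i<n. \<Sum>j\<le>i. \<Sum>k. gamma_coef a k j * alpha_coef \<beta> k (i - j) / t ^ i
                                        * ((1 + \<beta>) / a * x) ^ k)\<bar>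
           \<le> fact (2 * n) / 2 * ((1 + \<beta>) * x * (a + (1 + \<beta>) * x))
               / (a ^ (n + 2) * (1 - (1 + \<beta>) * x / a) ^ (2 * n + 1)) * (1 / t ^ n))
       \<and> (\<forall>n::nat. (\<lambda>t::real. hyp2f1 1 (t * (1 + \<beta>)) (a * t + 1) x
                       - (\<Sum>i<n. expansion_coef \<beta> a x i / t ^ i))
                   \<in> O[at_top](\<lambda>t. 1 / t ^ n))"
  using main_bound[OF assms(1,2,3,4,6)] bigo_part[OF assms(1,2,3,4,6)] by blast

end
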